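(* For every integer $n\ge 1$, let $M_T(n)$ denote the maximum modulus of an independence root over all trees on $n$ vertices. Then $$M_T(n)\le \begin{cases} 2^{\frac{n-1}{2}}+\frac{n-1}{2} & \text{if } n \text{ is odd},\\ 2^{\frac{n-2}{2}}+\frac{n}{2} & \text{if } n \text{ is even}.\end{cases}$$
   Context: For a finite simple graph $G$, the independence polynomial is $i(G,x)=\sum_{k=0}^{\alpha(G)} i_k x^k$, where $i_k$ is the number of independent sets of size $k$ in $G$ (with $i_0=1$) and $\alpha(G)$ is the independence number. Its complex roots are the independence roots of $G$. *)

theory Defs
  imports "HOL-Analysis.Analysis" "HOL-Computational_Algebra.Polynomial"
begin

definition simple_graph :: "'a set \<Rightarrow> 'a set set \<Rightarrow> bool" where
  "simple_graph V E \<longleftrightarrow> finite V \<and> (\<forall>e\<in>E. e \<subseteq> V \<and> card e = 2)"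

definition adj :: "'a set set \<Rightarrow> 'a \<Rightarrow> 'a \<Rightarrow> bool" where
  "adj E u v \<longleftrightarrow> {u, v} \<in> E"

definition connected_graph :: "'a set \<Rightarrow> 'a set set \<Rightarrow> bool" where
  "connected_graph V E \<longleftrightarrow>
     (\<forall>u\<in>V. \<forall>v\<in>V. (u, v) \<in> {(x, y). adj E x y}\<^sup>*)"

definition is_cycle :: "'a set set \<Rightarrow> 'a list \<Rightarrow> bool" where
  "is_cycle E cs \<longleftrightarrow> length cs \<ge> 3 \<and> distinct cs \<and>
     (\<forall>i < length cs - 1. adj E (cs ! i) (cs ! Suc i)) \<and> adj E (last cs) (hd cs)"

definition acyclic_graph :: "'a set \<Rightarrow> 'a set set \<Rightarrow> bool" where
  "acyclic_graph V E \<longleftrightarrow> \<not> (\<exists>cs. set cs \<subseteq> V \<and> is_cycle E cs)"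

definition is_tree :: "'a set \<Rightarrow> 'a set set \<Rightarrow> bool" where
  "is_tree V E \<longleftrightarrow> simple_graph V E \<and> V \<noteq> {} \<and> connected_graph V E \<and> acyclic_graph V E"

definition independent_set :: "'a set \<Rightarrow> 'a set set \<Rightarrow> 'a set \<Rightarrow> bool" where
  "independent_set V E S \<longleftrightarrow> S \<subseteq> V \<and> (\<forall>u\<in>S. \<forall>v\<in>S. \<not> adj E u v)"

definition indep_poly :: "'a set \<Rightarrow> 'a set set \<Rightarrow> complex poly" where
  "indep_poly V E = (\<Sum>k\<le>card V. monom (of_nat (card {S. independent_set V E S \<and> card S = k})) k)"

definition independence_root :: "'a set \<Rightarrow> 'a set set \<Rightarrow> complex \<Rightarrow> bool" where
  "independence_root V E z \<longleftrightarrow> poly (indep_poly V E) z = 0"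

end

theory Submission
  imports Defs
begin


definition nb :: "'a set \<Rightarrow> 'a set set \<Rightarrow> 'a \<Rightarrow> 'a set" where
  "nb W E u = {w\<in>W. adj E u w}"

definition cnt :: "'a set \<Rightarrow> 'a set set \<Rightarrow> nat \<Rightarrow> nat" where
  "cnt W E k = card {S. independent_set W E S \<and> card S = k}"

lemma adj_sym: "adj E u v = adj E v u"
  by (simp add: adj_def insert_commute)

lemma fin_sets: "finite W \<Longrightarrow> finite {S. independent_set W E S \<and> card S = k}"
  by (rule finite_subset[of _ "Pow W"]) (auto simp: independent_set_def)

lemma cnt0: "finite W \<Longrightarrow> cnt W E 0 = 1"
proof -
  assume f: "finite W"
  have "{S. independent_set W E S \<and> card S = 0} = {{}}"
    using f by (auto simp: independent_set_def intro: finite_subset dest: rev_finite_subset)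
  then show ?thesis by (simp add: cnt_def)
qed

lemma cnt_mono: "finite W \<Longrightarrow> W' \<subseteq> W \<Longrightarrow> cnt W' E k \<le> cnt W E k"
  unfolding cnt_def
  by (rule card_mono[OF fin_sets]) (auto simp: independent_set_def)

lemma cnt_empty: "cnt {} E (Suc k) = 0"
proof -
  have "{S. independent_set {} E S \<and> card S = Suc k} = {}"
    by (auto simp: independent_set_def)
  then show ?thesis unfolding cnt_def by (metis card.empty)
qed

lemma cnt_down: assumes "finite W" "cnt W E (Suc k) > 0" shows "cnt W E k > 0"
proof -
  from assms(2) obtain S where S: "independent_set W E S" "card S = Suc k"
    unfolding cnt_def by (metis (mono_tags, lifting) card.empty empty_Collect_eq less_irrefl)
  then obtain x where x: "x \<in> S" by fastforce
  have "independent_set W E (S - {x})" using S(1) by (auto simp: independent_set_def)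
  moreover have "card (S - {x}) = k" using S(2) x by (simp add: card_Diff_singleton_if)
  ultimately have "{T. independent_set W E T \<and> card T = k} \<noteq> {}" by blast
  then show ?thesis unfolding cnt_def using fin_sets[OF assms(1)] by (simp add: card_gt_0_iff)
qed

lemma cnt_rec:
  assumes f: "finite W" and u: "u \<in> W" and nl: "\<not> adj E u u"
  shows "cnt W E (Suc k) = cnt (W - {u}) E (Suc k) + cnt (W - insert u (nb W E u)) E k"
proof -
  let ?A = "{S. independent_set (W - {u}) E S \<and> card S = Suc k}"
  let ?B = "{S. independent_set (W - insert u (nb W E u)) E S \<and> card S = k}"
  have eq: "{S. independent_set W E S \<and> card S = Suc k} = ?A \<union> insert u ` ?B"
  proof
    show "{S. independent_set W E S \<and> card S = Suc k} \<subseteq> ?A \<union> insert u ` ?B"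
    proof
      fix S assume "S \<in> {S. independent_set W E S \<and> card S = Suc k}"
      then have S: "independent_set W E S" "card S = Suc k" by auto
      have fS: "finite S" using S(1) f by (auto simp: independent_set_def intro: finite_subset)
      show "S \<in> ?A \<union> insert u ` ?B"
      proof (cases "u \<in> S")
        case False
        then show ?thesis using S by (auto simp: independent_set_def)
      next
        case True
        have "S - {u} \<in> ?B"
          using S True fS by (auto simp: independent_set_def nb_def)
        moreover have "S = insert u (S - {u})" using True by auto
        ultimately show ?thesis by blast
      qed
    qed
  next
    show "?A \<union> insert u ` ?B \<subseteq> {S. independent_set W E S \<and> card S = Suc k}"
    proof
      fix S assume "S \<in> ?A \<union> insert u ` ?B"
      then show "S \<in> {S. independent_set W E S \<and> card S = Suc k}"
      proof
        assume "S \<in> ?A" then show ?thesis by (auto simp: independent_set_def)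
      next
        assume "S \<in> insert u ` ?B"
        then obtain T where T: "T \<in> ?B" "S = insert u T" by blast
        have fT: "finite T" using T f by (auto simp: independent_set_def intro: finite_subset)
        have "u \<notin> T" using T by (auto simp: independent_set_def)
        then have "card S = Suc k" using T fT by simp
        moreover have "independent_set W E S"
          using T u nl by (auto simp: independent_set_def nb_def adj_sym)
        ultimately show ?thesis by simp
      qed
    qed
  qed
  have disj: "?A \<inter> insert u ` ?B = {}" by (auto simp: independent_set_def)
  have inj: "inj_on (insert u) ?B"
    by (rule inj_onI) (auto simp: independent_set_def)
  have "cnt W E (Suc k) = card (?A \<union> insert u ` ?B)" unfolding cnt_def eq ..
  also have "\<dots> = card ?A + card (insert u ` ?B)"
    by (rule card_Un_disjoint) (use fin_sets[of "W - {u}"] fin_sets[of "W - insert u (nb W E u)"] f disj in auto)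
  also have "card (insert u ` ?B) = card ?B" by (rule card_image[OF inj])
  finally show ?thesis unfolding cnt_def .
qed

lemma acyc_sub: "acyclic_graph W E \<Longrightarrow> W' \<subseteq> W \<Longrightarrow> acyclic_graph W' E"
  unfolding acyclic_graph_def by blast

definition ispath :: "'a set \<Rightarrow> 'a set set \<Rightarrow> 'a list \<Rightarrow> bool" where
  "ispath W E ps \<longleftrightarrow> ps \<noteq> [] \<and> distinct ps \<and> set ps \<subseteq> W \<and>
     (\<forall>i. Suc i < length ps \<longrightarrow> adj E (ps ! i) (ps ! Suc i))"

lemma leaf_exists:
  assumes f: "finite W" and ne: "W \<noteq> {}" and ac: "acyclic_graph W E"
    and nl: "\<forall>x. \<not> adj E x x"
  shows "\<exists>u\<in>W. nb W E u = {} \<or> (\<exists>v. nb W E u = {v})"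
proof (rule ccontr)
  assume "\<not> ?thesis"
  then have nn: "\<And>u. u \<in> W \<Longrightarrow> nb W E u \<noteq> {} \<and> (\<forall>v. nb W E u \<noteq> {v})" by blast
  have two: "\<forall>u\<in>W. \<forall>y. \<exists>t\<in>nb W E u. t \<noteq> y"
  proof (intro ballI allI)
    fix u y assume u: "u \<in> W"
    show "\<exists>t\<in>nb W E u. t \<noteq> y"
    proof (rule ccontr)
      assume "\<not> (\<exists>t\<in>nb W E u. t \<noteq> y)"
      then have "nb W E u \<subseteq> {y}" by blast
      then have "nb W E u = {} \<or> nb W E u = {y}" by blast
      then show False using nn[OF u] by blast
    qed
  qed
  obtain x where x: "x \<in> W" using ne by blast
  let ?P = "\<lambda>l. \<exists>ps. ispath W E ps \<and> length ps = l"
  have P1: "?P 1" using x by (intro exI[of _ "[x]"]) (auto simp: ispath_def)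
  have bnd: "\<forall>l. ?P l \<longrightarrow> l \<le> card W"
  proof (intro allI impI)
    fix l assume "?P l"
    then obtain ps where ps: "ispath W E ps" "length ps = l" by blast
    have "card (set ps) = length ps" using ps(1) by (simp add: ispath_def distinct_card)
    moreover have "card (set ps) \<le> card W" using ps(1) f by (intro card_mono) (auto simp: ispath_def)
    ultimately show "l \<le> card W" using ps(2) by simp
  qed
  obtain L where L: "?P L" "\<forall>l. ?P l \<longrightarrow> l \<le> L"
    using Nat.ex_has_greatest_nat[of ?P 1 "card W", OF P1 bnd] by blast
  then obtain ps where ps: "ispath W E ps" "length ps = L" by blast
  have ps0: "ps \<noteq> []" "distinct ps" "set ps \<subseteq> W"
    "\<And>i. Suc i < length ps \<Longrightarrow> adj E (ps ! i) (ps ! Suc i)"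
    using ps(1) by (auto simp: ispath_def)
  define y where "y = hd ps"
  have yW: "y \<in> W" using ps0(1,3) hd_in_set y_def by blast
  have y0: "ps ! 0 = y" using ps0(1) y_def by (simp add: hd_conv_nth)
  obtain t where t: "t \<in> nb W E y" "t \<noteq> ps ! 1" using two yW by blast
  have tW: "t \<in> W" and yt: "adj E y t" using t by (auto simp: nb_def)
  have ty: "t \<noteq> y" using yt nl by auto
  show False
  proof (cases "t \<in> set ps")
    case False
    have "ispath W E (t # ps)"
      unfolding ispath_def
    proof (intro conjI allI impI)
      show "distinct (t # ps)" using False ps0 by simp
      show "set (t # ps) \<subseteq> W" using tW ps0 by simp
      fix i assume i: "Suc i < length (t # ps)"
      show "adj E ((t # ps) ! i) ((t # ps) ! Suc i)"
      proof (cases i)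
        case 0 then show ?thesis using yt y0 by (simp add: adj_sym)
      next
        case (Suc j) then show ?thesis using i ps0(4)[of j] by simp
      qed
    qed simp
    then have "?P (Suc L)" using ps(2) by (intro exI[of _ "t # ps"]) simp
    then have "Suc L \<le> L" using L(2) by blast
    then show False by simp
  next
    case True
    then obtain i where i: "i < length ps" "ps ! i = t" by (metis in_set_conv_nth)
    have "i \<noteq> 0" using i y0 ty by (metis)
    moreover have "i \<noteq> 1" using i t by auto
    ultimately have i2: "2 \<le> i" by simp
    define cs where "cs = take (Suc i) ps"
    have lcs: "length cs = Suc i" using i cs_def by simp
    have "is_cycle E cs"
      unfolding is_cycle_def
    proof (intro conjI allI impI)
      show "3 \<le> length cs" using lcs i2 by simp
      show "distinct cs" using ps0 cs_def by simp
      fix j assume j: "j < length cs - 1"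
      have "Suc j < length ps" using j lcs i by simp
      then have "adj E (ps ! j) (ps ! Suc j)" by (rule ps0(4))
      moreover have "cs ! j = ps ! j" "cs ! Suc j = ps ! Suc j" using j lcs cs_def by auto
      ultimately show "adj E (cs ! j) (cs ! Suc j)" by simp
    next
      have "last cs = cs ! i" using lcs by (metis Zero_not_Suc diff_Suc_1 last_conv_nth list.size(3))
      then have "last cs = t" using lcs i cs_def by simp
      moreover have "hd cs = y" using cs_def y_def ps0(1) by simp
      ultimately show "adj E (last cs) (hd cs)" using yt by (simp add: adj_sym)
    qed
    moreover have "set cs \<subseteq> W" using ps0 cs_def by (meson order_trans set_take_subset)
    ultimately show False using ac by (auto simp: acyclic_graph_def)
  qed
qed

lemma leaf_data:
  assumes nl: "\<forall>x. \<not> adj E x x" and f: "finite W" and u: "u \<in> W" and v: "nb W E u = {v}"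
  shows "v \<in> W" "adj E u v" "v \<noteq> u" "u \<in> nb W E v"
    "\<And>k. cnt W E (Suc k) = cnt (W - {u}) E (Suc k) + cnt (W - {u, v}) E k"
    "\<And>k. cnt (W - {u}) E (Suc k) = cnt (W - {u, v}) E (Suc k) + cnt (W - insert v (nb W E v)) E k"
    "W - insert v (nb W E v) \<subseteq> W - {u, v}"
proof -
  have vn: "v \<in> nb W E u" using v by simp
  show vW: "v \<in> W" using vn by (simp add: nb_def)
  show uv: "adj E u v" using vn by (simp add: nb_def)
  show vu: "v \<noteq> u" using uv nl by metis
  have "adj E v u" using uv adj_sym by metis
  then show uN: "u \<in> nb W E v" using u by (simp add: nb_def)
  then show "W - insert v (nb W E v) \<subseteq> W - {u, v}" by blast
  have e1: "W - insert u (nb W E u) = W - {u, v}" using v by simp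
  have nlu: "\<not> adj E u u" using nl by blast
  show "\<And>k. cnt W E (Suc k) = cnt (W - {u}) E (Suc k) + cnt (W - {u, v}) E k"
    using cnt_rec[OF f u nlu] e1 by simp
  have W1v: "W - {u} - {v} = W - {u, v}" by blast
  have W13: "W - {u} - insert v (nb (W - {u}) E v) = W - insert v (nb W E v)"
    using uN unfolding nb_def by blast
  have f1: "finite (W - {u})" using f by simp
  have v1: "v \<in> W - {u}" using vW vu by simp
  have nlv: "\<not> adj E v v" using nl by blast
  show "\<And>k. cnt (W - {u}) E (Suc k) = cnt (W - {u, v}) E (Suc k) + cnt (W - insert v (nb W E v)) E k"
    using cnt_rec[OF f1 v1 nlv] W1v W13 by simp
qed

lemma lemM:
  assumes nl: "\<forall>x. \<not> adj E x x"
  shows "finite W \<Longrightarrow> acyclic_graph W E \<Longrightarrow> cnt W E (Suc j) = 0 \<Longrightarrow> cnt W E j \<le> 2 ^ (card W div 2)"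
proof (induction "card W" arbitrary: W j rule: less_induct)
  case less
  show ?case
  proof (cases j)
    case 0 then show ?thesis using cnt0[OF less.prems(1)] by simp
  next
    case (Suc j')
    show ?thesis
    proof (cases "W = {}")
      case True then show ?thesis using Suc cnt_empty[of E j'] by simp
    next
      case False
      obtain u where u: "u \<in> W" "nb W E u = {} \<or> (\<exists>v. nb W E u = {v})"
        using leaf_exists[OF less.prems(1) False less.prems(2) nl] by blast
      have nlu: "\<not> adj E u u" using nl by blast
      note r = cnt_rec[OF less.prems(1) u(1) nlu]
      have lt: "card (W - {u}) < card W" using u(1) less.prems(1) by (meson card_Diff1_less)
      from u(2) show ?thesis
      proof
        assume iso: "nb W E u = {}"
        have c1: "cnt W E (Suc j') = cnt (W - {u}) E (Suc j') + cnt (W - {u}) E j'" using r[of j'] iso by simp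
        have c2: "cnt W E (Suc (Suc j')) = cnt (W - {u}) E (Suc (Suc j')) + cnt (W - {u}) E (Suc j')"
          using r[of "Suc j'"] iso by simp
        have z: "cnt (W - {u}) E (Suc j') = 0" using c2 less.prems(3) Suc by simp
        have "cnt (W - {u}) E j' \<le> 2 ^ (card (W - {u}) div 2)"
          by (rule less.hyps[OF lt]) (use less.prems z acyc_sub[OF less.prems(2)] in auto)
        also have "\<dots> \<le> 2 ^ (card W div 2)"
          by (rule power_increasing) (use lt in \<open>auto intro: div_le_mono\<close>)
        finally show ?thesis using c1 z Suc by simp
      next
        assume "\<exists>v. nb W E u = {v}"
        then obtain v where v: "nb W E u = {v}" by blast
        note ld = leaf_data[OF nl less.prems(1) u(1) v]
        have c1: "cnt W E (Suc j') = cnt (W - {u,v}) E (Suc j') + cnt (W - insert v (nb W E v)) E j' + cnt (W - {u,v}) E j'"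
          using ld(5)[of j'] ld(6)[of j'] by simp
        have c2: "cnt W E (Suc (Suc j')) = cnt (W - {u}) E (Suc (Suc j')) + cnt (W - {u,v}) E (Suc j')"
          using ld(5)[of "Suc j'"] by simp
        have z2: "cnt (W - {u,v}) E (Suc j') = 0" using c2 less.prems(3) Suc by simp
        have z3: "cnt (W - insert v (nb W E v)) E (Suc j') = 0"
          using cnt_mono[of "W - {u,v}" "W - insert v (nb W E v)" E "Suc j'"] ld(7) z2 less.prems(1) by simp
        have card2: "card (W - {u,v}) = card W - 2" using u(1) ld(1) ld(3) less.prems(1) by (simp add: card_Diff_subset)
        have n2: "2 \<le> card W" using u(1) ld(1) ld(3) less.prems(1)
          by (metis card_2_iff card_mono empty_subsetI insert_subset)
        have card3: "card (W - insert v (nb W E v)) \<le> card (W - {u,v})"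
          using ld(7) less.prems(1) by (simp add: card_mono)
        have lt2: "card (W - {u,v}) < card W" using card2 n2 by simp
        have h2: "cnt (W - {u,v}) E j' \<le> 2 ^ (card (W - {u,v}) div 2)"
          by (rule less.hyps[OF lt2]) (use less.prems z2 acyc_sub[OF less.prems(2)] in auto)
        have h3: "cnt (W - insert v (nb W E v)) E j' \<le> 2 ^ (card (W - insert v (nb W E v)) div 2)"
          by (rule less.hyps) (use less.prems z3 acyc_sub[OF less.prems(2)] card3 lt2 in auto)
        have p3: "2 ^ (card (W - insert v (nb W E v)) div 2) \<le> (2::nat) ^ (card (W - {u,v}) div 2)"
          by (rule power_increasing) (use card3 in \<open>auto intro: div_le_mono\<close>)
        have h3': "cnt (W - insert v (nb W E v)) E j' \<le> 2 ^ ((card W - 2) div 2)"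
          using order_trans[OF h3 p3] card2 by simp
        have h2': "cnt (W - {u,v}) E j' \<le> 2 ^ ((card W - 2) div 2)"
          using h2 card2 by simp
        have "cnt W E (Suc j') \<le> 2 * 2 ^ ((card W - 2) div 2)"
          using c1 z2 h2' h3' by linarith
        also have "\<dots> = 2 ^ (card W div 2)"
        proof -
          have "(card W - 2) div 2 + 1 = card W div 2" using n2 by presburger
          then show ?thesis by (metis power_Suc Suc_eq_plus1)
        qed
        finally show ?thesis using Suc by simp
      qed
    qed
  qed
qed

definition Bn :: "nat \<Rightarrow> nat" where
  "Bn n = (if n = 0 then 0 else if odd n then 2 ^ ((n - 1) div 2) + (n - 1) div 2
           else 2 ^ ((n - 2) div 2) + n div 2)"

lemma nat_cases2: fixes n :: nat obtains m where "n = 2 * m" | m where "n = 2 * m + 1"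
  by (cases "even n") (auto elim!: evenE oddE)

lemma Bn_odd: "Bn (2 * m + 1) = 2 ^ m + m"
  unfolding Bn_def by simp

lemma Bn_even: "Bn (2 * m + 2) = 2 ^ m + (m + 1)"
proof -
  have "odd (2 * m + 2) = False" by simp
  moreover have "(2 * m + 2 - 2) div 2 = m" "(2 * m + 2) div 2 = m + 1" by simp_all
  ultimately show ?thesis unfolding Bn_def by (simp only:) simp
qed

lemma Bn_0: "Bn 0 = 0" by (simp add: Bn_def)

lemma B_ge1: "1 \<le> n \<Longrightarrow> 1 \<le> Bn n"
proof -
  assume n: "1 \<le> n"
  show ?thesis
  proof (cases n rule: nat_cases2)
    case (1 m)
    then obtain m' where "m = Suc m'" using n by (cases m) auto
    then have "n = 2 * m' + 2" using 1 by simp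
    then show ?thesis using Bn_even[of m'] by simp
  next
    case (2 m)
    have "(1::nat) \<le> 2 ^ m + m" by (rule trans_le_add1) simp
    then show ?thesis using 2 Bn_odd[of m] by (simp del: One_nat_def)
  qed
qed

lemma B_step1: assumes n: "1 \<le> n" shows "Bn (n - 1) + 1 \<le> Bn n"
proof (cases n rule: nat_cases2)
  case (1 m)
  then obtain m' where "m = Suc m'" using n by (cases m) auto
  then have e: "n = 2 * m' + 2" "n - 1 = 2 * m' + 1" using 1 by simp_all
  have "Bn n = 2 ^ m' + (m' + 1)" using e(1) Bn_even by simp
  moreover have "Bn (n - 1) = 2 ^ m' + m'" by (subst e(2), rule Bn_odd)
  ultimately show ?thesis by simp
next
  case (2 m)
  show ?thesis
  proof (cases m)
    case 0 then show ?thesis using 2 by (simp add: Bn_def)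
  next
    case (Suc m')
    then have e: "n = 2 * (m' + 1) + 1" "n - 1 = 2 * m' + 2" using 2 by simp_all
    have "2 ^ m' + 1 \<le> (2::nat) ^ Suc m'" by simp
    moreover have "Bn n = 2 ^ (m' + 1) + (m' + 1)" by (subst e(1), rule Bn_odd)
    moreover have "Bn (n - 1) = 2 ^ m' + (m' + 1)" by (subst e(2), rule Bn_even)
    ultimately show ?thesis by simp
  qed
qed

lemma B_step2: assumes n: "3 \<le> n" shows "1 + Bn (n - 2) + 2 ^ ((n - 3) div 2) \<le> Bn n"
proof (cases n rule: nat_cases2)
  case (1 m)
  then obtain m' where "m = Suc (Suc m')" using n by (cases m; cases "m - 1") auto
  then have e: "n = 2 * (m' + 1) + 2" "n - 2 = 2 * m' + 2" "(n - 3) div 2 = m'" using 1 by simp_all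
  have "Bn n = 2 ^ (m' + 1) + (m' + 1 + 1)" by (subst e(1), rule Bn_even)
  moreover have "Bn (n - 2) = 2 ^ m' + (m' + 1)" by (subst e(2), rule Bn_even)
  ultimately show ?thesis using e(3) by simp
next
  case (2 m)
  then obtain m' where "m = Suc m'" using n by (cases m) auto
  then have e: "n = 2 * (m' + 1) + 1" "n - 2 = 2 * m' + 1" "(n - 3) div 2 = m'" using 2 by simp_all
  have "Bn n = 2 ^ (m' + 1) + (m' + 1)" by (subst e(1), rule Bn_odd)
  moreover have "Bn (n - 2) = 2 ^ m' + m'" by (subst e(2), rule Bn_odd)
  ultimately show ?thesis using e(3) by simp
qed

lemma B_mono1: "1 \<le> n \<Longrightarrow> Bn (n - 1) \<le> Bn n"
  using B_step1 by fastforce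



lemma B_mono2: assumes "2 \<le> n" shows "Bn (n - 2) \<le> Bn n"
proof -
  have a: "Bn (n - 1 - 1) \<le> Bn (n - 1)" by (rule B_mono1) (use assms in simp)
  have b: "Bn (n - 1) \<le> Bn n" by (rule B_mono1) (use assms in simp)
  have "n - 1 - 1 = n - 2" by simp
  then show ?thesis using a b by simp
qed

lemma lemR:
  assumes nl: "\<forall>x. \<not> adj E x x"
  shows "finite W \<Longrightarrow> acyclic_graph W E \<Longrightarrow> cnt W E (Suc k) > 0 \<Longrightarrow>
    cnt W E k \<le> Bn (card W) * cnt W E (Suc k)"
proof (induction "card W" arbitrary: W k rule: less_induct)
  case less
  have fW: "finite W" and acW: "acyclic_graph W E" and pos: "cnt W E (Suc k) > 0" using less.prems by auto
  have ne: "W \<noteq> {}" using pos cnt_empty[of E k] by auto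
  have n1: "1 \<le> card W" using ne fW by (simp add: Suc_le_eq card_gt_0_iff)
  show ?case
  proof (cases k)
    case 0
    have "1 * 1 \<le> Bn (card W) * cnt W E (Suc k)"
      by (rule mult_le_mono) (use B_ge1[OF n1] pos in auto)
    then show ?thesis using 0 cnt0[OF fW] by simp
  next
    case (Suc k')
    obtain u where u: "u \<in> W" "nb W E u = {} \<or> (\<exists>v. nb W E u = {v})"
      using leaf_exists[OF fW ne acW nl] by blast
    have nlu: "\<not> adj E u u" using nl by blast
    note r = cnt_rec[OF fW u(1) nlu]
    have lt: "card (W - {u}) < card W" using u(1) fW by (meson card_Diff1_less)
    have c1card: "card (W - {u}) = card W - 1" using u(1) fW by simp
    have f1: "finite (W - {u})" using fW by simp
    have a1: "acyclic_graph (W - {u}) E" using acyc_sub[OF acW] by blast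
    have B1: "Bn (card (W - {u})) \<le> Bn (card W)" using c1card B_mono1[OF n1] by simp
    from u(2) show ?thesis
    proof
      assume iso: "nb W E u = {}"
      have c1: "cnt W E (Suc k') = cnt (W - {u}) E (Suc k') + cnt (W - {u}) E k'" using r[of k'] iso by simp
      have c2: "cnt W E (Suc (Suc k')) = cnt (W - {u}) E (Suc (Suc k')) + cnt (W - {u}) E (Suc k')"
        using r[of "Suc k'"] iso by simp
      show ?thesis
      proof (cases "cnt (W - {u}) E (Suc (Suc k')) > 0")
        case True
        have h1: "cnt (W - {u}) E (Suc k') \<le> Bn (card (W - {u})) * cnt (W - {u}) E (Suc (Suc k'))"
          by (rule less.hyps[OF lt f1 a1 True])
        have p1: "cnt (W - {u}) E (Suc k') > 0" using cnt_down[OF f1 True] .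
        have h0: "cnt (W - {u}) E k' \<le> Bn (card (W - {u})) * cnt (W - {u}) E (Suc k')"
          by (rule less.hyps[OF lt f1 a1 p1])
        have "cnt W E (Suc k') \<le> Bn (card (W - {u})) * cnt W E (Suc (Suc k'))"
          using c1 c2 h1 h0 by (simp add: distrib_left)
        also have "\<dots> \<le> Bn (card W) * cnt W E (Suc (Suc k'))"
          by (rule mult_right_mono[OF B1]) simp
        finally show ?thesis using Suc by simp
      next
        case False
        then have p1: "cnt (W - {u}) E (Suc k') > 0" using c2 pos Suc by simp
        have h0: "cnt (W - {u}) E k' \<le> Bn (card (W - {u})) * cnt (W - {u}) E (Suc k')"
          by (rule less.hyps[OF lt f1 a1 p1])
        have "cnt W E (Suc k') \<le> (Bn (card (W - {u})) + 1) * cnt (W - {u}) E (Suc k')"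
          using c1 h0 by simp
        also have "\<dots> \<le> Bn (card W) * cnt (W - {u}) E (Suc k')"
          by (rule mult_right_mono) (use B_step1[OF n1] c1card in auto)
        finally show ?thesis using Suc c2 False by simp
      qed
    next
      assume "\<exists>v. nb W E u = {v}"
      then obtain v where v: "nb W E u = {v}" by blast
      note ld = leaf_data[OF nl fW u(1) v]
      have c1: "cnt W E (Suc k') = cnt (W - {u}) E (Suc k') + cnt (W - {u,v}) E k'"
        using ld(5) by simp
      have c2: "cnt W E (Suc (Suc k')) = cnt (W - {u}) E (Suc (Suc k')) + cnt (W - {u,v}) E (Suc k')"
        using ld(5) by simp
      have f2: "finite (W - {u,v})" using fW by simp
      have a2: "acyclic_graph (W - {u,v}) E" using acyc_sub[OF acW] by blast
      have card2: "card (W - {u,v}) = card W - 2" using u(1) ld(1) ld(3) fW by (simp add: card_Diff_subset)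
      have n2: "2 \<le> card W" using u(1) ld(1) ld(3) fW
        by (metis card_2_iff card_mono empty_subsetI insert_subset)
      have lt2: "card (W - {u,v}) < card W" using card2 n2 by simp
      have p2: "cnt (W - {u,v}) E (Suc k') > 0"
      proof (rule ccontr)
        assume z: "\<not> ?thesis"
        then have "cnt (W - {u}) E (Suc (Suc k')) > 0" using c2 pos Suc by simp
        moreover have "cnt (W - {u}) E (Suc (Suc k')) = cnt (W - {u,v}) E (Suc (Suc k')) + cnt (W - insert v (nb W E v)) E (Suc k')"
          using ld(6) by simp
        moreover have "cnt (W - {u,v}) E (Suc (Suc k')) = 0" using z cnt_down[OF f2, of E "Suc k'"] by auto
        moreover have "cnt (W - insert v (nb W E v)) E (Suc k') \<le> cnt (W - {u,v}) E (Suc k')"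
          by (rule cnt_mono[OF f2 ld(7)])
        ultimately show False using z by simp
      qed
      have h2: "cnt (W - {u,v}) E k' \<le> Bn (card (W - {u,v})) * cnt (W - {u,v}) E (Suc k')"
        by (rule less.hyps[OF lt2 f2 a2 p2])
      show ?thesis
      proof (cases "cnt (W - {u}) E (Suc (Suc k')) > 0")
        case True
        have h1: "cnt (W - {u}) E (Suc k') \<le> Bn (card (W - {u})) * cnt (W - {u}) E (Suc (Suc k'))"
          by (rule less.hyps[OF lt f1 a1 True])
        have B2: "Bn (card (W - {u,v})) \<le> Bn (card W)"
          using card2 B_mono2[OF n2] by simp
        have "cnt (W - {u}) E (Suc k') \<le> Bn (card W) * cnt (W - {u}) E (Suc (Suc k'))"
          using h1 mult_right_mono[OF B1] order_trans by blast
        moreover have "cnt (W - {u,v}) E k' \<le> Bn (card W) * cnt (W - {u,v}) E (Suc k')"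
          using h2 mult_right_mono[OF B2] order_trans by blast
        ultimately have "cnt W E (Suc k') \<le> Bn (card W) * cnt W E (Suc (Suc k'))"
          using c1 c2 by (simp add: distrib_left)
        then show ?thesis using Suc by simp
      next
        case False
        have e6: "cnt (W - {u}) E (Suc k') = cnt (W - {u,v}) E (Suc k') + cnt (W - insert v (nb W E v)) E k'"
          using ld(6) by simp
        have "cnt (W - {u}) E (Suc (Suc k')) = cnt (W - {u,v}) E (Suc (Suc k')) + cnt (W - insert v (nb W E v)) E (Suc k')"
          using ld(6) by simp
        then have z3: "cnt (W - insert v (nb W E v)) E (Suc k') = 0" using False by simp
        have f3: "finite (W - insert v (nb W E v))" using fW by simp
        have a3: "acyclic_graph (W - insert v (nb W E v)) E" using acyc_sub[OF acW] by blast
        have h3: "cnt (W - insert v (nb W E v)) E k' \<le> 2 ^ (card (W - insert v (nb W E v)) div 2)"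
          by (rule lemM[OF nl f3 a3 z3])
        have "nb W E v \<noteq> {u}"
        proof
          assume "nb W E v = {u}"
          then have "W - insert v (nb W E v) = W - {u,v}" by auto
          then show False using z3 p2 by simp
        qed
        then obtain w where w: "w \<in> nb W E v" "w \<noteq> u" using ld(4) by blast
        have wW: "w \<in> W" and vw: "adj E v w" using w by (auto simp: nb_def)
        have wv: "w \<noteq> v" using vw nl by metis
        have sub3: "W - insert v (nb W E v) \<subseteq> W - {u,v,w}" using w ld(4) by blast
        have card3: "card (W - {u,v,w}) = card W - 3"
          using u(1) ld(1) ld(3) wW w(2) wv fW by (simp add: card_Diff_subset)
        have n3: "3 \<le> card W"
        proof -
          have "card {u,v,w} \<le> card W" using u(1) ld(1) wW fW by (intro card_mono) auto
          moreover have "card {u,v,w} = 3" using ld(3) w(2) wv by auto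
          ultimately show ?thesis by simp
        qed
        have "card (W - insert v (nb W E v)) \<le> card W - 3"
          using card_mono[OF _ sub3] fW card3 by simp
        then have "(2::nat) ^ (card (W - insert v (nb W E v)) div 2) \<le> 2 ^ ((card W - 3) div 2)"
          by (intro power_increasing div_le_mono) auto
        then have h3': "cnt (W - insert v (nb W E v)) E k' \<le> 2 ^ ((card W - 3) div 2) * cnt (W - {u,v}) E (Suc k')"
        proof -
          have q: "(2::nat) ^ ((card W - 3) div 2) \<le> 2 ^ ((card W - 3) div 2) * cnt (W - {u,v}) E (Suc k')"
            using p2 by simp
          show ?thesis using h3 q \<open>(2::nat) ^ (card (W - insert v (nb W E v)) div 2) \<le> 2 ^ ((card W - 3) div 2)\<close>
            by linarith
        qed
        have h2': "cnt (W - {u,v}) E k' \<le> Bn (card W - 2) * cnt (W - {u,v}) E (Suc k')"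
          using h2 card2 by simp
        have "cnt W E (Suc k') \<le> (1 + Bn (card W - 2) + 2 ^ ((card W - 3) div 2)) * cnt (W - {u,v}) E (Suc k')"
          using c1 e6 h2' h3' by (simp add: distrib_right)
        also have "\<dots> \<le> Bn (card W) * cnt (W - {u,v}) E (Suc k')"
          by (rule mult_right_mono[OF B_step2[OF n3]]) simp
        finally show ?thesis using Suc c2 False by simp
      qed
    qed
  qed
qed

lemma EK_id:
  fixes b :: "nat \<Rightarrow> real" and w :: complex
  shows "(1 - w) * (\<Sum>k\<le>d. of_real (b k) * w ^ k) =
    of_real (b 0) + (\<Sum>k<d. of_real (b (Suc k) - b k) * w ^ Suc k) - of_real (b d) * w ^ Suc d"
  by (induction d) (simp_all add: algebra_simps)

lemma EK:
  fixes b :: "nat \<Rightarrow> real" and w :: complex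
  assumes b0: "0 \<le> b 0" and inc: "\<And>k. k < d \<Longrightarrow> b k \<le> b (Suc k)" and bd: "b d > 0"
    and w: "norm w > 1"
  shows "(\<Sum>k\<le>d. of_real (b k) * w ^ k) \<noteq> 0"
proof
  assume S: "(\<Sum>k\<le>d. of_real (b k) * w ^ k) = 0"
  define r where "r = norm w"
  have r1: "r > 1" using w r_def by simp
  have eq: "of_real (b d) * w ^ Suc d = of_real (b 0) + (\<Sum>k<d. of_real (b (Suc k) - b k) * w ^ Suc k)"
    using EK_id[of w b d] S by (simp add: algebra_simps)
  have "b d * r ^ Suc d = norm (of_real (b d) * w ^ Suc d)"
    using bd r_def by (simp add: norm_mult norm_power)
  also have "\<dots> \<le> norm (of_real (b 0) :: complex) + norm (\<Sum>k<d. of_real (b (Suc k) - b k) * w ^ Suc k)"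
    unfolding eq by (rule norm_triangle_ineq)
  also have "\<dots> \<le> b 0 + (\<Sum>k<d. (b (Suc k) - b k) * r ^ Suc k)"
  proof -
    have "norm (\<Sum>k<d. of_real (b (Suc k) - b k) * w ^ Suc k) \<le> (\<Sum>k<d. norm (of_real (b (Suc k) - b k) * w ^ Suc k))"
      by (rule norm_sum)
    also have "\<dots> = (\<Sum>k<d. (b (Suc k) - b k) * r ^ Suc k)"
    proof (rule sum.cong)
      fix k assume "k \<in> {..<d}"
      then have "b (Suc k) - b k \<ge> 0" using inc by simp
      then have nn: "norm (complex_of_real (b (Suc k) - b k)) = b (Suc k) - b k"
        by (simp only: norm_of_real abs_of_nonneg)
      show "norm (of_real (b (Suc k) - b k) * w ^ Suc k) = (b (Suc k) - b k) * r ^ Suc k"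
        unfolding norm_mult norm_power nn r_def ..
    qed simp
    finally show ?thesis using b0 by simp
  qed
  also have "\<dots> \<le> b 0 * r ^ d + (\<Sum>k<d. (b (Suc k) - b k) * r ^ d)"
  proof (rule add_mono)
    show "b 0 \<le> b 0 * r ^ d" using b0 r1 by (simp add: mult_le_cancel_left1 one_le_power)
    show "(\<Sum>k<d. (b (Suc k) - b k) * r ^ Suc k) \<le> (\<Sum>k<d. (b (Suc k) - b k) * r ^ d)"
    proof (rule sum_mono)
      fix k assume k: "k \<in> {..<d}"
      then have "b (Suc k) - b k \<ge> 0" using inc by simp
      moreover have "r ^ Suc k \<le> r ^ d" using k r1 by (intro power_increasing) auto
      ultimately show "(b (Suc k) - b k) * r ^ Suc k \<le> (b (Suc k) - b k) * r ^ d"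
        by (simp add: mult_left_mono)
    qed
  qed
  also have "\<dots> = b d * r ^ d"
  proof -
    have "(\<Sum>k<d. (b (Suc k) - b k) * r ^ d) = (\<Sum>k<d. b (Suc k) - b k) * r ^ d"
      by (rule sum_distrib_right[symmetric])
    also have "(\<Sum>k<d. b (Suc k) - b k) = b d - b 0" by (rule sum_lessThan_telescope)
    finally show ?thesis by (simp add: algebra_simps)
  qed
  finally have "b d * r ^ d * r \<le> b d * r ^ d * 1" by (simp add: algebra_simps)
  moreover have "b d * r ^ d > 0" using bd r1 by simp
  ultimately have "r \<le> 1" by (metis mult_le_cancel_left_pos)
  then show False using r1 by simp
qed

lemma cnt_pos_le: "finite W \<Longrightarrow> k \<le> d \<Longrightarrow> cnt W E d > 0 \<Longrightarrow> cnt W E k > 0"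
proof (induction d)
  case 0 then show ?case by simp
next
  case (Suc d)
  show ?case
  proof (cases "k = Suc d")
    case True then show ?thesis using Suc by simp
  next
    case False
    then have "k \<le> d" using Suc by simp
    moreover have "cnt W E d > 0" using cnt_down Suc by blast
    ultimately show ?thesis using Suc by blast
  qed
qed

theorem corollary2:
  fixes n :: nat and V :: "'a set" and E :: "'a set set" and z :: complex
  assumes "n \<ge> 1" and "is_tree V E" and "card V = n" and "independence_root V E z"
  shows "norm z \<le> (if odd n then 2 powr ((real n - 1) / 2) + (real n - 1) / 2
                   else 2 powr ((real n - 2) / 2) + real n / 2)"
proof -
  have sg: "simple_graph V E" and ac: "acyclic_graph V E" using assms(2) by (auto simp: is_tree_def)
  have fV: "finite V" using sg by (simp add: simple_graph_def)
  have nl: "\<forall>x. \<not> adj E x x"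
  proof
    fix x show "\<not> adj E x x"
    proof
      assume "adj E x x"
      then have "{x} \<in> E" by (simp add: adj_def)
      then have "card {x} = 2" using sg by (auto simp: simple_graph_def)
      then show False by simp
    qed
  qed
  have P: "poly (indep_poly V E) z = (\<Sum>k\<le>n. of_nat (cnt V E k) * z ^ k)"
    unfolding indep_poly_def cnt_def poly_sum poly_monom using assms(3) by simp
  have root: "(\<Sum>k\<le>n. of_nat (cnt V E k) * z ^ k) = 0"
    using assms(4) P by (simp add: independence_root_def)
  define C where "C = real (Bn n)"
  have C1: "C \<ge> 1" using B_ge1[OF assms(1)] C_def by simp
  have key: "norm z \<le> C"
  proof (rule ccontr)
    assume "\<not> norm z \<le> C"
    then have zC: "norm z > C" by simp
    have P0: "0 \<le> n \<and> cnt V E 0 > 0" using cnt0[OF fV] by simp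
    obtain d where d: "d \<le> n \<and> cnt V E d > 0" "\<forall>y. y \<le> n \<and> cnt V E y > 0 \<longrightarrow> y \<le> d"
      using Nat.ex_has_greatest_nat[of "\<lambda>k. k \<le> n \<and> cnt V E k > 0" 0 n, OF P0] by blast
    have pos: "\<And>k. k \<le> d \<Longrightarrow> cnt V E k > 0" using cnt_pos_le[OF fV] d(1) by blast
    have zero: "\<And>k. k \<in> {..n} - {..d} \<Longrightarrow> of_nat (cnt V E k) * z ^ k = 0"
      using d(2) by fastforce
    have ratio: "\<And>k. k < d \<Longrightarrow> cnt V E k \<le> Bn n * cnt V E (Suc k)"
      using lemR[OF nl fV ac] pos assms(3) by (metis Suc_leI)
    have s1: "(\<Sum>k\<le>n. of_nat (cnt V E k) * z ^ k) = (\<Sum>k\<le>d. of_nat (cnt V E k) * z ^ k)"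
      by (rule sum.mono_neutral_right) (use d(1) zero in auto)
    define w where "w = z / of_real C"
    have zw: "z = of_real C * w" using C1 w_def by simp
    define b where "b k = real (cnt V E k) * C ^ k" for k
    have s2: "(\<Sum>k\<le>d. of_nat (cnt V E k) * z ^ k) = (\<Sum>k\<le>d. of_real (b k) * w ^ k)"
      by (rule sum.cong) (simp_all add: b_def zw power_mult_distrib)
    have "(\<Sum>k\<le>d. of_real (b k) * w ^ k) \<noteq> 0"
    proof (rule EK)
      show "0 \<le> b 0" by (simp add: b_def)
      show "b d > 0" using d(1) C1 by (simp add: b_def)
      show "norm w > 1" using zC C1 by (simp add: w_def norm_divide)
      fix k assume k: "k < d"
      have "real (cnt V E k) \<le> C * real (cnt V E (Suc k))"
        using ratio[OF k] C_def by (metis of_nat_le_iff of_nat_mult)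
      then have "real (cnt V E k) * C ^ k \<le> C * real (cnt V E (Suc k)) * C ^ k"
        using C1 by (intro mult_right_mono) auto
      then show "b k \<le> b (Suc k)" by (simp add: b_def algebra_simps)
    qed
    then show False using root s1 s2 by simp
  qed
  show ?thesis
  proof (cases n rule: nat_cases2)
    case (1 m)
    then obtain m' where m': "m = Suc m'" using assms(1) by (cases m) auto
    then have e: "n = 2 * m' + 2" using 1 by simp
    have "C = 2 ^ m' + (m' + 1)" using C_def e Bn_even by simp
    moreover have "(real n - 2) / 2 = real m'" "real n / 2 = real m' + 1" "\<not> odd n" using e by simp_all
    moreover have "(2::real) powr real m' = 2 ^ m'" by (simp add: powr_realpow)
    ultimately show ?thesis using key by (simp only: if_False) simp
  next
    case (2 m)
    have "C = 2 ^ m + m" using C_def 2 Bn_odd by simp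
    moreover have "(real n - 1) / 2 = real m" using 2 by simp
    ultimately show ?thesis using key 2 by (simp add: powr_realpow)
  qed
qed

end
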